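(* Let $R$ be a regular run. If Dir is set to close at some moment $\alpha$, then Dir = close over the interval $(\alpha,\alpha+d_{close})$.
   Context: Setting (evolving algebra for the railroad crossing). States are structures over a vocabulary containing: a finite universe Tracks; the reals and ExtendedReals $=\mathbb{R}\cup\{\infty\}$ with standard $<$ and $+$ ($\infty$ largest); a nullary real-valued symbol $\mathrm{CT}$ (current time); positive real constants $d_{close},d_{open},d_{min},d_{max}$ with $d_{close}<d_{min}\le d_{max}$; a unary function TrackStatus from Tracks to $\{\text{empty},\text{coming},\text{incrossing}\}$; a unary function Deadline from Tracks to ExtendedReals; a nullary Dir with values in $\{\text{open},\text{close}\}$; a nullary GateStatus with values in $\{\text{opened},\text{closed}\}$. Put $W=d_{min}-d_{close}$ and $\Delta_{close}=d_{close}+(d_{max}-d_{min})=d_{max}-W$. For a track $x$, $s(x)$ is the condition [$\mathrm{TrackStatus}(x)=\text{empty}$ or $\mathrm{CT}+d_{open}<\mathrm{Deadline}(x)$], and SafeToOpen is $\forall x\in\mathrm{Tracks}\ s(x)$. The program has two modules (agents). Gate: simultaneously OpenGate "if Dir=open then GateStatus:=opened" and CloseGate "if Dir=close then GateStatus:=closed". Controller: simultaneously, for every track $x$, SetDeadline$(x)$ "if TrackStatus$(x)$=coming and Deadline$(x)=\infty$ then Deadline$(x):=\mathrm{CT}+W$", SignalClose$(x)$ "if $\mathrm{CT}=$Deadline$(x)$ then Dir:=close", ClearDeadline$(x)$ "if TrackStatus$(x)$=empty and Deadline$(x)<\infty$ then Deadline$(x):=\infty$", together with SignalOpen "if Dir=close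 and SafeToOpen then Dir:=open". Executing a module means computing all updates it generates in the current state and performing them simultaneously (nothing happens if the update set is inconsistent). A module is enabled at a state if its update set is consistent and contains an update that changes the state. TrackStatus is external (changed only by the environment); Deadline, Dir, GateStatus are internal (changed only by the modules); other symbols are static. Runs: for $t\mapsto R(t)$, $t\in[0,\infty)$, let $\rho(t)$ be the reduct of $R(t)$ without CT. $R$ is a pre-run if all $R(t)$ share a superuniverse, $\mathrm{CT}=t$ in $R(t)$, and for every $\tau>0$ there are $0=t_0<\dots<t_n=\tau$ with $\rho$ constant on each $(t_i,t_{i+1})$. For a term $e$ (free variables fixed), $e_t$ is its value in $R(t)$, $e_{t+}$ (resp. $e_{t-}$, $t>0$) its constant value on some $(t,t+\epsilon)$ (resp. $(t-\epsilon,t)$); likewise $\rho(t\pm)$. $e$ holds over an interval if it holds at each point; $e$ becomes (is set to) $a$ at $t$ if $e_{t-}\ne a=e_t$ or $e_t\neq a=e_{t+}$. A pre-run is a run if (i) whenever $\rho(t+)\neq\rho(t)$, $\rho(t+)$ is the CT-free reduct of the result of executing some modules at $R(t)$ (these agents fire at $t$), with external functions equal in $\rho(t)$ and $\rho(t+)$; (ii) whenever $t>0$ and $\rho(t)\ne\rho(t-)$, they differ only in external functions. An agent is immediate if it fires at every moment it is enabled; bounded if immediate or there is $b>0$ with no interval $(t,t+b)$ over which it is enabled but never fires. Initial states: TrackStatus$(x)$=empty and Deadline$(x)=\infty$ for every track $x$. A regular run is a run $R$ with $R(0)$ initial such that: (Train Motion) for each track $x$ there is a finite or infinite sequence $0=t_0<t_1<t_2<\cdots$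 (the significant moments of $x$) with TrackStatus$(x)$=empty over each $[t_{3i},t_{3i+1})$, =coming over each $[t_{3i+1},t_{3i+2})$ where $d_{min}\le t_{3i+2}-t_{3i+1}\le d_{max}$, =incrossing over each $[t_{3i+2},t_{3i+3})$, and, if the sequence is finite with last element $t_k$, then $3\mid k$ and TrackStatus$(x)$=empty over $[t_k,\infty)$; (Controller Timing) Controller is immediate; (Gate Timing) Gate is bounded, there is no interval $(t,t+d_{close})$ over which Dir=close and GateStatus=opened both hold, and no interval $(t,t+d_{open})$ over which Dir=open and GateStatus=closed both hold. *)

theory Defs
  imports Main "HOL.Real"
begin

datatype tstat = Empty | Coming | Incrossing
datatype dirv = Open | Close
datatype gstat = Opened | Closed

datatype xreal = Fin real | Infty

fun xless :: "xreal \<Rightarrow> xreal \<Rightarrow> bool" where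
  "xless (Fin a) (Fin b) = (a < b)"
| "xless (Fin a) Infty = True"
| "xless Infty _ = False"

text \<open>CT-free reduct of a state (tracks form the finite type 'tr; the static
  constants d_close, d_open, d_min, d_max are passed as parameters).\<close>
record 'tr st =
  TS :: "'tr \<Rightarrow> tstat"
  DL :: "'tr \<Rightarrow> xreal"
  Dir :: dirv
  GS :: gstat

datatype agent = Gate | Controller

datatype 'tr upd = UDL 'tr xreal | UDir dirv | UGS gstat

datatype 'tr loc = LDL 'tr | LDir | LGS

fun uloc :: "'tr upd \<Rightarrow> 'tr loc" where
  "uloc (UDL x v) = LDL x"
| "uloc (UDir d) = LDir"
| "uloc (UGS g) = LGS"

definition consistent :: "'tr upd set \<Rightarrow> bool" where
  "consistent U \<longleftrightarrow> (\<forall>u\<in>U. \<forall>u'\<in>U. uloc u = uloc u' \<longrightarrow> u = u')"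

fun changes :: "'tr st \<Rightarrow> 'tr upd \<Rightarrow> bool" where
  "changes S (UDL x v) = (DL S x \<noteq> v)"
| "changes S (UDir d) = (Dir S \<noteq> d)"
| "changes S (UGS g) = (GS S \<noteq> g)"

definition SafeToOpen :: "real \<Rightarrow> real \<Rightarrow> 'tr st \<Rightarrow> bool" where
  "SafeToOpen dopen t S \<longleftrightarrow>
     (\<forall>x. TS S x = Empty \<or> xless (Fin (t + dopen)) (DL S x))"

text \<open>Update set generated by a module at state S with current time CT = t.\<close>
fun upds :: "real \<Rightarrow> real \<Rightarrow> real \<Rightarrow> agent \<Rightarrow> real \<Rightarrow> 'tr st \<Rightarrow> 'tr upd set" where
  "upds dclose dopen dmin Gate t S =
     (if Dir S = Open then {UGS Opened} else {}) \<union>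
     (if Dir S = Close then {UGS Closed} else {})"
| "upds dclose dopen dmin Controller t S =
     {UDL x (Fin (t + (dmin - dclose))) | x. TS S x = Coming \<and> DL S x = Infty} \<union>
     {UDir Close | x. Fin t = DL S x} \<union>
     {UDL x Infty | x. TS S x = Empty \<and> xless (DL S x) Infty} \<union>
     (if Dir S = Close \<and> SafeToOpen dopen t S then {UDir Open} else {})"

definition apply_upds :: "'tr upd set \<Rightarrow> 'tr st \<Rightarrow> 'tr st" where
  "apply_upds U S = S\<lparr>
     DL := (\<lambda>x. if (\<exists>v. UDL x v \<in> U) then (SOME v. UDL x v \<in> U) else DL S x),
     Dir := (if (\<exists>d. UDir d \<in> U) then (SOME d. UDir d \<in> U) else Dir S),
     GS := (if (\<exists>g. UGS g \<in> U) then (SOME g. UGS g \<in> U) else GS S)\<rparr>"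

definition exec :: "real \<Rightarrow> real \<Rightarrow> real \<Rightarrow> agent set \<Rightarrow> real \<Rightarrow> 'tr st \<Rightarrow> 'tr st" where
  "exec dclose dopen dmin M t S =
     apply_upds (\<Union>m\<in>M. if consistent (upds dclose dopen dmin m t S)
                         then upds dclose dopen dmin m t S else {}) S"

definition enabled :: "real \<Rightarrow> real \<Rightarrow> real \<Rightarrow> agent \<Rightarrow> real \<Rightarrow> 'tr st \<Rightarrow> bool" where
  "enabled dclose dopen dmin m t S \<longleftrightarrow>
     consistent (upds dclose dopen dmin m t S) \<and>
     (\<exists>u\<in>upds dclose dopen dmin m t S. changes S u)"

text \<open>rho t is the CT-free reduct of R(t) (CT = t is implicit).\<close>
definition rval :: "(real \<Rightarrow> 'a) \<Rightarrow> real \<Rightarrow> 'a" where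
  "rval f t = (THE v. \<exists>e>0. \<forall>s. t < s \<and> s < t + e \<longrightarrow> f s = v)"

definition lval :: "(real \<Rightarrow> 'a) \<Rightarrow> real \<Rightarrow> 'a" where
  "lval f t = (THE v. \<exists>e>0. \<forall>s. t - e < s \<and> s < t \<longrightarrow> f s = v)"

definition pre_run :: "(real \<Rightarrow> 'tr st) \<Rightarrow> bool" where
  "pre_run \<rho> \<longleftrightarrow>
     (\<forall>\<tau>>0. \<exists>(ts :: nat \<Rightarrow> real) n. ts 0 = 0 \<and> ts n = \<tau> \<and>
        (\<forall>i<n. ts i < ts (Suc i)) \<and>
        (\<forall>i<n. \<exists>v. \<forall>s. ts i < s \<and> s < ts (Suc i) \<longrightarrow> \<rho> s = v))"

definition is_run :: "real \<Rightarrow> real \<Rightarrow> real \<Rightarrow> (real \<Rightarrow> 'tr st) \<Rightarrow> bool" where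
  "is_run dclose dopen dmin \<rho> \<longleftrightarrow> pre_run \<rho> \<and>
     (\<forall>t\<ge>0. rval \<rho> t \<noteq> \<rho> t \<longrightarrow>
        (\<exists>M. rval \<rho> t = exec dclose dopen dmin M t (\<rho> t)) \<and> TS (rval \<rho> t) = TS (\<rho> t)) \<and>
     (\<forall>t>0. \<rho> t \<noteq> lval \<rho> t \<longrightarrow>
        DL (\<rho> t) = DL (lval \<rho> t) \<and> Dir (\<rho> t) = Dir (lval \<rho> t) \<and> GS (\<rho> t) = GS (lval \<rho> t))"

definition fires :: "real \<Rightarrow> real \<Rightarrow> real \<Rightarrow> (real \<Rightarrow> 'tr st) \<Rightarrow> agent \<Rightarrow> real \<Rightarrow> bool" where
  "fires dclose dopen dmin \<rho> m t \<longleftrightarrow> rval \<rho> t \<noteq> \<rho> t \<and>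
     (\<exists>M. m \<in> M \<and> rval \<rho> t = exec dclose dopen dmin M t (\<rho> t))"

definition immediate :: "real \<Rightarrow> real \<Rightarrow> real \<Rightarrow> (real \<Rightarrow> 'tr st) \<Rightarrow> agent \<Rightarrow> bool" where
  "immediate dclose dopen dmin \<rho> m \<longleftrightarrow>
     (\<forall>t\<ge>0. enabled dclose dopen dmin m t (\<rho> t) \<longrightarrow> fires dclose dopen dmin \<rho> m t)"

definition bounded :: "real \<Rightarrow> real \<Rightarrow> real \<Rightarrow> (real \<Rightarrow> 'tr st) \<Rightarrow> agent \<Rightarrow> bool" where
  "bounded dclose dopen dmin \<rho> m \<longleftrightarrow> immediate dclose dopen dmin \<rho> m \<or>
     (\<exists>b>0. \<not> (\<exists>t\<ge>0. (\<forall>s. t < s \<and> s < t + b \<longrightarrow> enabled dclose dopen dmin m s (\<rho> s)) \<and>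
                      (\<forall>s. t < s \<and> s < t + b \<longrightarrow> \<not> fires dclose dopen dmin \<rho> m s)))"

definition initial :: "'tr st \<Rightarrow> bool" where
  "initial S \<longleftrightarrow> (\<forall>x. TS S x = Empty \<and> DL S x = Infty)"

text \<open>Significant moments of track x: ts i for i in the index set (all i if fin = None,
  i \<le> k if fin = Some k).\<close>
definition train_motion :: "real \<Rightarrow> real \<Rightarrow> (real \<Rightarrow> 'tr st) \<Rightarrow> 'tr \<Rightarrow> bool" where
  "train_motion dmin dmax \<rho> x \<longleftrightarrow>
     (\<exists>(ts :: nat \<Rightarrow> real) (fin :: nat option).
        (let D = (\<lambda>i. case fin of None \<Rightarrow> True | Some k \<Rightarrow> i \<le> k) in
         ts 0 = 0 \<and>
         (\<forall>i. D (Suc i) \<longrightarrow> ts i < ts (Suc i)) \<and>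
         (\<forall>i. D (3*i+1) \<longrightarrow> (\<forall>s. ts (3*i) \<le> s \<and> s < ts (3*i+1) \<longrightarrow> TS (\<rho> s) x = Empty)) \<and>
         (\<forall>i. D (3*i+2) \<longrightarrow> (\<forall>s. ts (3*i+1) \<le> s \<and> s < ts (3*i+2) \<longrightarrow> TS (\<rho> s) x = Coming) \<and>
               dmin \<le> ts (3*i+2) - ts (3*i+1) \<and> ts (3*i+2) - ts (3*i+1) \<le> dmax) \<and>
         (\<forall>i. D (3*i+3) \<longrightarrow> (\<forall>s. ts (3*i+2) \<le> s \<and> s < ts (3*i+3) \<longrightarrow> TS (\<rho> s) x = Incrossing)) \<and>
         (\<forall>k. fin = Some k \<longrightarrow> 3 dvd k \<and> (\<forall>s. ts k \<le> s \<longrightarrow> TS (\<rho> s) x = Empty))))"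

definition regular_run :: "real \<Rightarrow> real \<Rightarrow> real \<Rightarrow> real \<Rightarrow> (real \<Rightarrow> 'tr st) \<Rightarrow> bool" where
  "regular_run dclose dopen dmin dmax \<rho> \<longleftrightarrow>
     is_run dclose dopen dmin \<rho> \<and> initial (\<rho> 0) \<and>
     (\<forall>x. train_motion dmin dmax \<rho> x) \<and>
     immediate dclose dopen dmin \<rho> Controller \<and>
     bounded dclose dopen dmin \<rho> Gate \<and>
     \<not> (\<exists>t\<ge>0. \<forall>s. t < s \<and> s < t + dclose \<longrightarrow> Dir (\<rho> s) = Close \<and> GS (\<rho> s) = Opened) \<and>
     \<not> (\<exists>t\<ge>0. \<forall>s. t < s \<and> s < t + dopen \<longrightarrow> Dir (\<rho> s) = Open \<and> GS (\<rho> s) = Closed)"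

text \<open>A term e (here: a function of the CT-free state) becomes a at t.\<close>
definition becomes :: "(real \<Rightarrow> 'tr st) \<Rightarrow> ('tr st \<Rightarrow> 'b) \<Rightarrow> 'b \<Rightarrow> real \<Rightarrow> bool" where
  "becomes \<rho> e a t \<longleftrightarrow>
     (t > 0 \<and> e (lval \<rho> t) \<noteq> a \<and> e (\<rho> t) = a) \<or> (e (\<rho> t) \<noteq> a \<and> e (rval \<rho> t) = a)"

end

theory Submission
  imports Defs
begin


lemma real_induct_from:
  fixes a :: real and P :: "real \<Rightarrow> bool"
  assumes L: "\<And>t. a \<le> t \<Longrightarrow> (\<And>u. a \<le> u \<Longrightarrow> u < t \<Longrightarrow> P u) \<Longrightarrow> P t"
    and R: "\<And>t. a \<le> t \<Longrightarrow> (\<And>u. a \<le> u \<Longrightarrow> u \<le> t \<Longrightarrow> P u) \<Longrightarrow> \<exists>e>0. \<forall>s. t < s \<and> s < t + e \<longrightarrow> P s"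
    and at: "a \<le> t"
  shows "P t"
proof (rule ccontr)
  assume nP: "\<not> P t"
  define S where "S = {t. a \<le> t \<and> \<not> P t}"
  have tS: "t \<in> S" using at nP S_def by auto
  have bdd: "bdd_below S" unfolding S_def bdd_below_def by auto
  define T where "T = Inf S"
  have aT: "a \<le> T" unfolding T_def using tS by (intro cInf_greatest) (auto simp: S_def)
  have below: "P u" if "a \<le> u" "u < T" for u
  proof (rule ccontr)
    assume "\<not> P u" then have "u \<in> S" using that S_def by auto
    then have "T \<le> u" unfolding T_def using bdd by (intro cInf_lower)
    with that show False by simp
  qed
  have PT: "P T" using L[OF aT] below by blast
  have upto: "P u" if "a \<le> u" "u \<le> T" for u
    using below PT that by (cases "u = T") auto
  obtain e where e: "e > 0" "\<forall>s. T < s \<and> s < T + e \<longrightarrow> P s" using R[OF aT upto] by blast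
  have "Inf S < T + e" using e(1) T_def by simp
  then obtain s where s: "s \<in> S" "s < T + e" using tS bdd by (subst (asm) cInf_less_iff) auto
  have "T \<le> s" unfolding T_def using bdd s(1) by (intro cInf_lower)
  moreover have "s \<noteq> T" using s(1) PT S_def by auto
  ultimately show False using e s S_def by auto
qed

lemma find_idx: fixes f :: "nat \<Rightarrow> real"
  shows "f 0 \<le> t \<Longrightarrow> t < f n \<Longrightarrow> \<exists>i<n. f i \<le> t \<and> t < f (Suc i)"
proof (induction n)
  case 0 then show ?case by simp
next
  case (Suc n)
  show ?case
  proof (cases "t < f n")
    case True then show ?thesis using Suc by (metis less_Suc_eq)
  next
    case False then show ?thesis using Suc by (metis lessI not_less)
  qed
qed

lemma find_idx2: fixes f :: "nat \<Rightarrow> real"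
  shows "f 0 < t \<Longrightarrow> t \<le> f n \<Longrightarrow> \<exists>i<n. f i < t \<and> t \<le> f (Suc i)"
proof (induction n)
  case 0 then show ?case by simp
next
  case (Suc n)
  show ?case
  proof (cases "t \<le> f n")
    case True then show ?thesis using Suc by (metis less_Suc_eq)
  next
    case False then show ?thesis using Suc by (metis lessI not_less)
  qed
qed

lemma rval_prop:
  assumes "pre_run \<rho>" "0 \<le> t"
  shows "\<exists>e>0. \<forall>s. t < s \<and> s < t + e \<longrightarrow> \<rho> s = rval \<rho> t"
proof -
  have "t + 1 > 0" using assms by simp
  have X: "\<forall>\<tau>>0. \<exists>(ts :: nat \<Rightarrow> real) n. ts 0 = 0 \<and> ts n = \<tau> \<and>
        (\<forall>i<n. ts i < ts (Suc i)) \<and>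
        (\<forall>i<n. \<exists>v. \<forall>s. ts i < s \<and> s < ts (Suc i) \<longrightarrow> \<rho> s = v)"
    using assms(1) unfolding pre_run_def .
  then obtain ts n where h: "ts 0 = 0" "ts n = t+1" "\<forall>i<n. \<exists>v. \<forall>s. ts i < s \<and> s < ts (Suc i) \<longrightarrow> \<rho> s = v"
    using \<open>t + 1 > 0\<close> by (auto elim!: allE[of _ "t+1"])
  obtain i where i: "i<n" "ts i \<le> t" "t < ts (Suc i)" using find_idx[of ts t n] h assms by auto
  obtain v where v: "\<forall>s. ts i < s \<and> s < ts (Suc i) \<longrightarrow> \<rho> s = v" using h(3) i(1) by blast
  define e where "e = ts (Suc i) - t"
  have e0: "e > 0" using i e_def by simp
  have cv: "\<forall>s. t < s \<and> s < t + e \<longrightarrow> \<rho> s = v" using v i e_def by auto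
  have "rval \<rho> t = v"
    unfolding rval_def
  proof (rule the_equality)
    show "\<exists>e>0. \<forall>s. t < s \<and> s < t + e \<longrightarrow> \<rho> s = v" using e0 cv by blast
  next
    fix v' assume "\<exists>e>0. \<forall>s. t < s \<and> s < t + e \<longrightarrow> \<rho> s = v'"
    then obtain e' where e': "e'>0" "\<forall>s. t < s \<and> s < t + e' \<longrightarrow> \<rho> s = v'" by blast
    define s where "s = t + min e e' / 2"
    have s1: "t < s" "s < t + e" "s < t + e'" using e0 e'(1) unfolding s_def by (auto simp: min_def)
    have "\<rho> s = v" using cv s1 by blast
    moreover have "\<rho> s = v'" using e' s1 by blast
    ultimately show "v' = v" by simp
  qed
  then show ?thesis using e0 cv by auto
qed

lemma lval_prop:
  assumes "pre_run \<rho>" "0 < t"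
  shows "\<exists>e>0. \<forall>s. t - e < s \<and> s < t \<longrightarrow> \<rho> s = lval \<rho> t"
proof -
  have "t + 1 > 0" using assms by simp
  have X: "\<forall>\<tau>>0. \<exists>(ts :: nat \<Rightarrow> real) n. ts 0 = 0 \<and> ts n = \<tau> \<and>
        (\<forall>i<n. ts i < ts (Suc i)) \<and>
        (\<forall>i<n. \<exists>v. \<forall>s. ts i < s \<and> s < ts (Suc i) \<longrightarrow> \<rho> s = v)"
    using assms(1) unfolding pre_run_def .
  then obtain ts n where h: "ts 0 = 0" "ts n = t+1" "\<forall>i<n. \<exists>v. \<forall>s. ts i < s \<and> s < ts (Suc i) \<longrightarrow> \<rho> s = v"
    using \<open>t + 1 > 0\<close> by (auto elim!: allE[of _ "t+1"])
  obtain i where i: "i<n" "ts i < t" "t \<le> ts (Suc i)" using find_idx2[of ts t n] h assms by auto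
  obtain v where v: "\<forall>s. ts i < s \<and> s < ts (Suc i) \<longrightarrow> \<rho> s = v" using h(3) i(1) by blast
  define e where "e = t - ts i"
  have e0: "e > 0" using i e_def by simp
  have cv: "\<forall>s. t - e < s \<and> s < t \<longrightarrow> \<rho> s = v" using v i e_def by auto
  have "lval \<rho> t = v"
    unfolding lval_def
  proof (rule the_equality)
    show "\<exists>e>0. \<forall>s. t - e < s \<and> s < t \<longrightarrow> \<rho> s = v" using e0 cv by blast
  next
    fix v' assume "\<exists>e>0. \<forall>s. t - e < s \<and> s < t \<longrightarrow> \<rho> s = v'"
    then obtain e' where e': "e'>0" "\<forall>s. t - e' < s \<and> s < t \<longrightarrow> \<rho> s = v'" by blast
    define s where "s = t - min e e' / 2"
    have s1: "t - e < s" "s < t" "t - e' < s" using e0 e'(1) unfolding s_def by (auto simp: min_def)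
    have "\<rho> s = v" using cv s1 by blast
    moreover have "\<rho> s = v'" using e' s1 by blast
    ultimately show "v' = v" by simp
  qed
  then show ?thesis using e0 cv by auto
qed

lemma run_left:
  assumes "is_run dc do dm \<rho>" "t > 0"
  shows "DL (\<rho> t) = DL (lval \<rho> t) \<and> Dir (\<rho> t) = Dir (lval \<rho> t)"
  using assms unfolding is_run_def by metis

lemma run_right:
  assumes "is_run dc do dm \<rho>" "t \<ge> 0" "rval \<rho> t \<noteq> \<rho> t"
  shows "\<exists>M. rval \<rho> t = exec dc do dm M t (\<rho> t)"
  using assms unfolding is_run_def by metis

lemma upds_C_DL: "UDL x v \<in> upds dc do dm Controller t S \<longleftrightarrow>
   (TS S x = Coming \<and> DL S x = Infty \<and> v = Fin (t + (dm - dc))) \<or> (TS S x = Empty \<and> xless (DL S x) Infty \<and> v = Infty)"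
  by auto

lemma upds_C_Dir: "UDir d \<in> upds dc do dm Controller t S \<longleftrightarrow>
   (d = Close \<and> (\<exists>x. Fin t = DL S x)) \<or> (d = Open \<and> Dir S = Close \<and> SafeToOpen do t S)"
  by auto

lemma upds_C_GS: "UGS g \<notin> upds dc do dm Controller t S"
  by auto

lemma upds_G: "UDL x v \<notin> upds dc do dm Gate t S" "UDir d \<notin> upds dc do dm Gate t S"
  by auto

declare upds.simps[simp del]

lemma mem_U_DL:
  "UDL x v \<in> (\<Union>m\<in>M. if consistent (upds dc do dm m t S) then upds dc do dm m t S else {}) \<longleftrightarrow>
   Controller \<in> M \<and> consistent (upds dc do dm Controller t S) \<and> UDL x v \<in> upds dc do dm Controller t S"
proof
  assume "UDL x v \<in> (\<Union>m\<in>M. if consistent (upds dc do dm m t S) then upds dc do dm m t S else {})"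
  then obtain m where m: "m \<in> M" "consistent (upds dc do dm m t S)" "UDL x v \<in> upds dc do dm m t S"
    by (auto split: if_splits)
  then show "Controller \<in> M \<and> consistent (upds dc do dm Controller t S) \<and> UDL x v \<in> upds dc do dm Controller t S"
    by (cases m) (auto simp: upds_G)
qed auto

lemma mem_U_Dir:
  "UDir d \<in> (\<Union>m\<in>M. if consistent (upds dc do dm m t S) then upds dc do dm m t S else {}) \<longleftrightarrow>
   Controller \<in> M \<and> consistent (upds dc do dm Controller t S) \<and> UDir d \<in> upds dc do dm Controller t S"
proof
  assume "UDir d \<in> (\<Union>m\<in>M. if consistent (upds dc do dm m t S) then upds dc do dm m t S else {})"
  then obtain m where m: "m \<in> M" "consistent (upds dc do dm m t S)" "UDir d \<in> upds dc do dm m t S"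
    by (auto split: if_splits)
  then show "Controller \<in> M \<and> consistent (upds dc do dm Controller t S) \<and> UDir d \<in> upds dc do dm Controller t S"
    by (cases m) (auto simp: upds_G)
qed auto

lemma apply_DL: "DL (apply_upds U S) x = (if \<exists>v. UDL x v \<in> U then (SOME v. UDL x v \<in> U) else DL S x)"
  by (simp add: apply_upds_def)

lemma apply_Dir: "Dir (apply_upds U S) = (if \<exists>d. UDir d \<in> U then (SOME d. UDir d \<in> U) else Dir S)"
  by (simp add: apply_upds_def)

lemma exec_DL:
  "DL (exec dc do dm M t S) x = (if Controller \<in> M \<and> consistent (upds dc do dm Controller t S) \<and>
     (\<exists>v. UDL x v \<in> upds dc do dm Controller t S) then (SOME v. UDL x v \<in> upds dc do dm Controller t S) else DL S x)"
  unfolding exec_def apply_DL mem_U_DL by auto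

lemma exec_Dir:
  "Dir (exec dc do dm M t S) = (if Controller \<in> M \<and> consistent (upds dc do dm Controller t S) \<and>
     (\<exists>d. UDir d \<in> upds dc do dm Controller t S) then (SOME d. UDir d \<in> upds dc do dm Controller t S) else Dir S)"
  unfolding exec_def apply_Dir mem_U_Dir by auto

lemma exec_DL_cases:
  "DL (exec dc do dm M t S) x = DL S x \<or> UDL x (DL (exec dc do dm M t S) x) \<in> upds dc do dm Controller t S"
  unfolding exec_DL by (auto intro: someI_ex)

lemma exec_Dir_cases:
  "Dir (exec dc do dm M t S) = Dir S \<or> UDir (Dir (exec dc do dm M t S)) \<in> upds dc do dm Controller t S"
  unfolding exec_Dir by (auto intro: someI_ex)

lemma exec_DL_exact:
  assumes "Controller \<in> M" "consistent (upds dc do dm Controller t S)" "UDL x v \<in> upds dc do dm Controller t S"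
  shows "DL (exec dc do dm M t S) x = v"
proof -
  have "(SOME v. UDL x v \<in> upds dc do dm Controller t S) = v"
    using assms(2,3) unfolding consistent_def by (metis (mono_tags) some_equality uloc.simps(1) upd.inject(1))
  then show ?thesis unfolding exec_DL using assms by auto
qed

lemma cons_C:
  assumes dpos: "do > 0" and h: "\<forall>y. DL S y = Fin t \<longrightarrow> TS S y \<noteq> Empty"
  shows "consistent (upds dc do dm Controller t S)"
  unfolding consistent_def
proof (intro ballI impI)
  fix u u' assume u: "u \<in> upds dc do dm Controller t S" and u': "u' \<in> upds dc do dm Controller t S"
    and l: "uloc u = uloc u'"
  show "u = u'"
  proof (cases u)
    case (UDL y v)
    then obtain v' where e: "u' = UDL y v'" using l by (cases u') auto
    show ?thesis using u u' UDL e by (auto simp: upds_C_DL)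
  next
    case (UDir d)
    then obtain d' where e: "u' = UDir d'" using l by (cases u') auto
    have False if a1: "\<exists>x. Fin t = DL S x" and a2: "SafeToOpen do t S"
    proof -
      obtain x where x: "Fin t = DL S x" using a1 by blast
      have d: "TS S x = Empty \<or> xless (Fin (t + do)) (DL S x)" using a2 unfolding SafeToOpen_def by blast
      have "TS S x \<noteq> Empty" using h x by metis
      moreover have "\<not> xless (Fin (t + do)) (DL S x)" using x[symmetric] dpos by simp
      ultimately show False using d by blast
    qed
    then show ?thesis using u u' UDir e by (auto simp: upds_C_Dir)
  next
    case (UGS g)
    then show ?thesis using u by (simp add: upds_C_GS)
  qed
qed



lemma coming_period_aux:
  fixes ts :: "nat \<Rightarrow> real" and D :: "nat \<Rightarrow> bool" and TSx :: "real \<Rightarrow> tstat" and fin :: "nat option"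
  assumes D_def: "D = (\<lambda>i. case fin of None \<Rightarrow> True | Some k \<Rightarrow> i \<le> k)"
  and t0: "ts 0 = 0" and inc: "\<forall>i. D (Suc i) \<longrightarrow> ts i < ts (Suc i)"
  and E: "\<forall>i. D (3*i+1) \<longrightarrow> (\<forall>s. ts (3*i) \<le> s \<and> s < ts (3*i+1) \<longrightarrow> TSx s = Empty)"
  and C: "\<forall>i. D (3*i+2) \<longrightarrow> (\<forall>s. ts (3*i+1) \<le> s \<and> s < ts (3*i+2) \<longrightarrow> TSx s = Coming) \<and>
               dmin \<le> ts (3*i+2) - ts (3*i+1) \<and> ts (3*i+2) - ts (3*i+1) \<le> dmax"
  and I: "\<forall>i. D (3*i+3) \<longrightarrow> (\<forall>s. ts (3*i+2) \<le> s \<and> s < ts (3*i+3) \<longrightarrow> TSx s = Incrossing)"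
  and F: "\<forall>k. fin = Some k \<longrightarrow> 3 dvd k \<and> (\<forall>s. ts k \<le> s \<longrightarrow> TSx s = Empty)"
  and dpos: "0 < dmin" and tpos: "0 \<le> t" and tc: "TSx t = Coming"
  shows "\<exists>c e. 0 \<le> c \<and> c \<le> t \<and> t < e \<and> dmin \<le> e - c \<and> (\<forall>s. c \<le> s \<and> s < e \<longrightarrow> TSx s = Coming)"
proof -
  have Ddown: "D i" if "D (Suc i)" for i using that unfolding D_def by (cases fin) auto
  have Dlast: "fin = Some k" if "D k" "\<not> D (Suc k)" for k using that unfolding D_def by (cases fin) auto
  have nonneg: "D k \<Longrightarrow> 0 \<le> ts k" for k
  proof (induction k)
    case 0 then show ?case using t0 by simp
  next
    case (Suc k)
    then have "D k" using Ddown by blast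
    then have "0 \<le> ts k" using Suc.IH by blast
    moreover have "ts k < ts (Suc k)" using inc Suc.prems by blast
    ultimately show ?case by linarith
  qed
  have key: "\<exists>k. D k \<and> ts k \<le> t \<and> (D (Suc k) \<longrightarrow> t < ts (Suc k))"
  proof (cases fin)
    case (Some K)
    show ?thesis
    proof (cases "ts K \<le> t")
      case True then show ?thesis using Some D_def by (intro exI[of _ K]) auto
    next
      case False
      then obtain i where "i<K" "ts i \<le> t" "t < ts (Suc i)" using find_idx[of ts t K] t0 tpos by auto
      then show ?thesis using Some D_def by (intro exI[of _ i]) auto
    qed
  next
    case None
    then have Dall: "D i" for i using D_def by simp
    have grow: "real i * dmin \<le> ts (3*i)" for i
    proof (induction i)
      case 0 then show ?case using t0 by simp
    next
      case (Suc i)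
      have a: "ts (3*i) < ts (3*i+1)" using inc Dall by (metis add.commute plus_1_eq_Suc)
      have b: "dmin \<le> ts (3*i+2) - ts (3*i+1)" using C Dall by blast
      have c: "ts (3*i+2) < ts (3*i+3)" using inc Dall by (metis add_Suc_right numeral_2_eq_2 numeral_3_eq_3 add.commute plus_1_eq_Suc)
      have "3 * Suc i = 3*i+3" by simp
      then show ?case using Suc a b c by (simp add: algebra_simps)
    qed
    obtain n where n: "t < real n * dmin" using ex_less_of_nat_mult[OF dpos] by blast
    have "t < ts (3*n)" using grow[of n] n by simp
    then obtain i where "i<3*n" "ts i \<le> t" "t < ts (Suc i)" using find_idx[of ts t "3*n"] t0 tpos by auto
    then show ?thesis using Dall by blast
  qed
  then obtain k where k: "D k" "ts k \<le> t" "D (Suc k) \<longrightarrow> t < ts (Suc k)" by blast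
  have "\<exists>i. k = 3*i \<or> k = 3*i+1 \<or> k = 3*i+2" by presburger
  then obtain i where ki: "k = 3*i \<or> k = 3*i+1 \<or> k = 3*i+2" by blast
  show ?thesis
  proof (cases "D (Suc k)")
    case False
    then have fk: "fin = Some k" using Dlast k(1) by blast
    then have "3 dvd k" "TSx t = Empty" using F k(2) by auto
    then show ?thesis using tc by simp
  next
    case True
    then have tk: "t < ts (Suc k)" using k by blast
    show ?thesis
    proof -
      { assume "k = 3*i"
        then have "TSx t = Empty" using E True k(2) tk by auto
        then have False using tc by simp }
      moreover
      { assume k2: "k = 3*i+2"
        then have sk: "Suc k = 3*i+3" by simp
        have D3: "D (3*i+3)" using True sk by metis
        have r: "\<forall>s. ts (3*i+2) \<le> s \<and> s < ts (3*i+3) \<longrightarrow> TSx s = Incrossing" using I D3 by blast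
        have a: "ts (3*i+2) \<le> t" using k(2) k2 by simp
        have b: "t < ts (3*i+3)" using tk[unfolded sk] .
        have "TSx t = Incrossing" using r a b by blast
        then have False using tc by simp }
      moreover
      { assume kk: "k = 3*i+1"
        then have "D (3*i+2)" using True by simp
        then have "(\<forall>s. ts (3*i+1) \<le> s \<and> s < ts (3*i+2) \<longrightarrow> TSx s = Coming) \<and> dmin \<le> ts (3*i+2) - ts (3*i+1)"
          using C by blast
        moreover have "0 \<le> ts (3*i+1)" using nonneg k(1) kk by simp
        ultimately have ?thesis using kk k(2) tk
          by (intro exI[of _ "ts (3*i+1)"] exI[of _ "ts (3*i+2)"]) auto }
      ultimately show ?thesis using ki by blast
    qed
  qed
qed

lemma coming_period:
  assumes tm: "train_motion dmin dmax \<rho> x" and "0 < dmin" and "0 \<le> t" and "TS (\<rho> t) x = Coming"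
  shows "\<exists>c e. 0 \<le> c \<and> c \<le> t \<and> t < e \<and> dmin \<le> e - c \<and> (\<forall>s. c \<le> s \<and> s < e \<longrightarrow> TS (\<rho> s) x = Coming)"
proof -
  obtain ts fin where H: "let D = (\<lambda>i. case fin of None \<Rightarrow> True | Some k \<Rightarrow> i \<le> k) in
         ts 0 = 0 \<and>
         (\<forall>i. D (Suc i) \<longrightarrow> ts i < ts (Suc i)) \<and>
         (\<forall>i. D (3*i+1) \<longrightarrow> (\<forall>s. ts (3*i) \<le> s \<and> s < ts (3*i+1) \<longrightarrow> TS (\<rho> s) x = Empty)) \<and>
         (\<forall>i. D (3*i+2) \<longrightarrow> (\<forall>s. ts (3*i+1) \<le> s \<and> s < ts (3*i+2) \<longrightarrow> TS (\<rho> s) x = Coming) \<and>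
               dmin \<le> ts (3*i+2) - ts (3*i+1) \<and> ts (3*i+2) - ts (3*i+1) \<le> dmax) \<and>
         (\<forall>i. D (3*i+3) \<longrightarrow> (\<forall>s. ts (3*i+2) \<le> s \<and> s < ts (3*i+3) \<longrightarrow> TS (\<rho> s) x = Incrossing)) \<and>
         (\<forall>k. fin = Some k \<longrightarrow> 3 dvd k \<and> (\<forall>s. ts k \<le> s \<longrightarrow> TS (\<rho> s) x = Empty))"
    using tm unfolding train_motion_def by blast
  define D where "D = (\<lambda>i. case fin of None \<Rightarrow> True | Some k \<Rightarrow> i \<le> k)"
  note H' = H[unfolded Let_def, folded D_def]
  show ?thesis
    using H[unfolded Let_def] assms
    by (intro coming_period_aux[where D="\<lambda>i. case fin of None \<Rightarrow> True | Some k \<Rightarrow> i \<le> k" and fin=fin and ts=ts and TSx="\<lambda>s. TS (\<rho> s) x", OF refl]) blast+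
qed



definition Gs :: "real \<Rightarrow> real \<Rightarrow> (real \<Rightarrow> 'tr st) \<Rightarrow> real \<Rightarrow> 'tr st \<Rightarrow> bool" where
 "Gs dc dm \<rho> t S \<longleftrightarrow> (\<forall>x d. DL S x = Fin d \<longrightarrow> d - (dm - dc) \<le> t \<and>
     (\<forall>s. d - (dm - dc) \<le> s \<and> s < d - (dm - dc) + dm \<longrightarrow> TS (\<rho> s) x = Coming))"

lemma Gs_mono: "Gs dc dm \<rho> t S \<Longrightarrow> t \<le> t' \<Longrightarrow> DL S' = DL S \<Longrightarrow> Gs dc dm \<rho> t' S'"
  unfolding Gs_def by force

lemma left_pick:
  assumes "pre_run \<rho>" "0 \<le> a" "a < u"
  shows "\<exists>s. a < s \<and> s < u \<and> \<rho> s = lval \<rho> u"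
proof -
  obtain e where e: "e > 0" "\<forall>s. u - e < s \<and> s < u \<longrightarrow> \<rho> s = lval \<rho> u"
    using lval_prop[OF assms(1)] assms(2,3) by force
  define s where "s = u - min (e/2) ((u-a)/2)"
  have "a < s" "s < u" "u - e < s" using e(1) assms(3) unfolding s_def by (auto simp: min_def field_simps)
  then show ?thesis using e(2) by blast
qed

context
  fixes dc do dm dM :: real and \<rho> :: "real \<Rightarrow> ('tr::finite) st"
  assumes dcpos: "0 < dc" and dopos: "0 < do" and dcm: "dc < dm"
    and reg: "regular_run dc do dm dM \<rho>"
begin

lemma run: "is_run dc do dm \<rho>" using reg unfolding regular_run_def by blast
lemma pre: "pre_run \<rho>" using run unfolding is_run_def by blast
lemma imm: "immediate dc do dm \<rho> Controller" using reg unfolding regular_run_def by blast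
lemma init: "initial (\<rho> 0)" using reg unfolding regular_run_def by blast
lemma tm: "train_motion dm dM \<rho> x" using reg unfolding regular_run_def by blast

lemma preserve_DL:
  assumes "0 \<le> u" "DL (\<rho> u) x \<noteq> Infty" "TS (\<rho> u) x \<noteq> Empty"
  shows "DL (rval \<rho> u) x = DL (\<rho> u) x"
proof (cases "rval \<rho> u = \<rho> u")
  case True then show ?thesis by simp
next
  case False
  then obtain M where M: "rval \<rho> u = exec dc do dm M u (\<rho> u)" using run_right[OF run assms(1)] by blast
  have "DL (exec dc do dm M u (\<rho> u)) x = DL (\<rho> u) x \<or>
        UDL x (DL (exec dc do dm M u (\<rho> u)) x) \<in> upds dc do dm Controller u (\<rho> u)"
    by (rule exec_DL_cases)
  then show ?thesis using assms M by (auto simp: upds_C_DL)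
qed

lemma dl_not_infty:
  assumes c0: "0 \<le> c" and ct: "c < t" and G: "\<forall>u. 0 \<le> u \<and> u \<le> t \<longrightarrow> Gs dc dm \<rho> u (\<rho> u)"
    and com: "\<forall>s. c \<le> s \<and> s \<le> t \<longrightarrow> TS (\<rho> s) x = Coming"
  shows "DL (\<rho> t) x \<noteq> Infty"
proof -
  let ?P = "\<lambda>u. c < u \<and> u \<le> t \<longrightarrow> DL (\<rho> u) x \<noteq> Infty"
  have "?P t"
  proof (rule real_induct_from[of c ?P])
    fix u assume cu: "c \<le> u" and IH: "\<And>v. c \<le> v \<Longrightarrow> v < u \<Longrightarrow> ?P v"
    show "?P u"
    proof
      assume h: "c < u \<and> u \<le> t"
      obtain s where s: "c < s" "s < u" "\<rho> s = lval \<rho> u" using left_pick[OF pre c0] h by blast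
      have "DL (\<rho> s) x \<noteq> Infty" using IH[of s] s h by auto
      moreover have "DL (\<rho> u) = DL (lval \<rho> u)" using run_left[OF run] h c0 by auto
      ultimately show "DL (\<rho> u) x \<noteq> Infty" using s by simp
    qed
  next
    fix u assume cu: "c \<le> u" and IH: "\<And>v. c \<le> v \<Longrightarrow> v \<le> u \<Longrightarrow> ?P v"
    show "\<exists>e>0. \<forall>s. u < s \<and> s < u + e \<longrightarrow> ?P s"
    proof (cases "t \<le> u")
      case True then show ?thesis by (intro exI[of _ 1]) auto
    next
      case False
      have u0: "0 \<le> u" using cu c0 by simp
      have tsu: "TS (\<rho> u) x = Coming" using com cu False by auto
      have R: "DL (rval \<rho> u) x \<noteq> Infty"
      proof (cases "u = c")
        case True
        have cons: "consistent (upds dc do dm Controller c (\<rho> c))"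
        proof (rule cons_C[OF dopos], intro allI impI)
          fix y assume y: "DL (\<rho> c) y = Fin c"
          have "Gs dc dm \<rho> c (\<rho> c)" using G c0 ct by auto
          then have "\<forall>s. c - (dm - dc) \<le> s \<and> s < c - (dm - dc) + dm \<longrightarrow> TS (\<rho> s) y = Coming"
            using y unfolding Gs_def by blast
          then have "TS (\<rho> c) y = Coming" using dcpos dcm by auto
          then show "TS (\<rho> c) y \<noteq> Empty" by simp
        qed
        show ?thesis
        proof (cases "DL (\<rho> c) x = Infty")
          case inf: True
          have mem: "UDL x (Fin (c + (dm - dc))) \<in> upds dc do dm Controller c (\<rho> c)"
            using inf tsu True by (simp add: upds_C_DL)
          have "enabled dc do dm Controller c (\<rho> c)"
            unfolding enabled_def using cons mem inf by force
          then have "fires dc do dm \<rho> Controller c" using imm c0 unfolding immediate_def by blast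
          then obtain M where M: "Controller \<in> M" "rval \<rho> c = exec dc do dm M c (\<rho> c)"
            unfolding fires_def by blast
          have "DL (rval \<rho> c) x = Fin (c + (dm - dc))"
            using exec_DL_exact[OF M(1) cons mem] M(2) by simp
          then show ?thesis using True by simp
        next
          case False
          then show ?thesis using preserve_DL[OF u0] tsu True by simp
        qed
      next
        case False
        then have "DL (\<rho> u) x \<noteq> Infty" using IH[of u] cu \<open>\<not> t \<le> u\<close> by auto
        then show ?thesis using preserve_DL[OF u0] tsu by simp
      qed
      obtain e where e: "e > 0" "\<forall>s. u < s \<and> s < u + e \<longrightarrow> \<rho> s = rval \<rho> u"
        using rval_prop[OF pre u0] by blast
      show ?thesis using e R by (intro exI[of _ e]) auto
    qed
  next
    show "c \<le> t" using ct by simp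
  qed
  then show ?thesis using ct by simp
qed

lemma G_all: assumes t00: "0 \<le> t" shows "Gs dc dm \<rho> t (\<rho> t)"
proof (rule real_induct_from[of 0 "\<lambda>t. Gs dc dm \<rho> t (\<rho> t)"])
  fix t assume t1: "0 \<le> t" and IH1: "\<And>u. 0 \<le> u \<Longrightarrow> u < t \<Longrightarrow> Gs dc dm \<rho> u (\<rho> u)"
  show "Gs dc dm \<rho> t (\<rho> t)"
  proof (cases "t = 0")
    case True
    then show ?thesis using init unfolding initial_def Gs_def by simp
  next
    case False
    then have t0: "0 < t" using t1 by simp
    obtain s where s: "0 < s" "s < t" "\<rho> s = lval \<rho> t" using left_pick[OF pre _ t0] by auto
    have "Gs dc dm \<rho> s (\<rho> s)" using IH1[of s] s by simp
    moreover have "DL (\<rho> t) = DL (\<rho> s)" using run_left[OF run t0] s by simp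
    ultimately show ?thesis using Gs_mono[of dc dm \<rho> s "\<rho> s" t "\<rho> t"] s by simp
  qed
next
  fix t assume t2: "0 \<le> t" and IH2: "\<And>u. 0 \<le> u \<Longrightarrow> u \<le> t \<Longrightarrow> Gs dc dm \<rho> u (\<rho> u)"
  have Gt: "Gs dc dm \<rho> t (\<rho> t)" using IH2 t2 by simp
  have R: "Gs dc dm \<rho> t (rval \<rho> t)"
  proof (cases "rval \<rho> t = \<rho> t")
    case True then show ?thesis using Gt by simp
  next
    case False
    then obtain M where M: "rval \<rho> t = exec dc do dm M t (\<rho> t)" using run_right[OF run t2] by blast
    show ?thesis
      unfolding Gs_def
    proof (intro allI impI)
      fix x d assume xd: "DL (rval \<rho> t) x = Fin d"
      have "DL (exec dc do dm M t (\<rho> t)) x = DL (\<rho> t) x \<or>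
        UDL x (DL (exec dc do dm M t (\<rho> t)) x) \<in> upds dc do dm Controller t (\<rho> t)"
        by (rule exec_DL_cases)
      then consider (same) "DL (\<rho> t) x = Fin d" | (new) "UDL x (Fin d) \<in> upds dc do dm Controller t (\<rho> t)"
        using M xd by auto
      then show "d - (dm - dc) \<le> t \<and> (\<forall>s. d - (dm - dc) \<le> s \<and> s < d - (dm - dc) + dm \<longrightarrow> TS (\<rho> s) x = Coming)"
      proof cases
        case same then show ?thesis using Gt unfolding Gs_def by blast
      next
        case new
        then have n: "TS (\<rho> t) x = Coming" "DL (\<rho> t) x = Infty" "d = t + (dm - dc)"
          by (auto simp: upds_C_DL)
        obtain c e where ce: "0 \<le> c" "c \<le> t" "t < e" "dm \<le> e - c" "\<forall>s. c \<le> s \<and> s < e \<longrightarrow> TS (\<rho> s) x = Coming"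
          using coming_period[OF tm _ t2 n(1)] dcpos dcm by auto
        have "c = t"
        proof (rule ccontr)
          assume "c \<noteq> t"
          then have "c < t" using ce by simp
          moreover have "\<forall>u. 0 \<le> u \<and> u \<le> t \<longrightarrow> Gs dc dm \<rho> u (\<rho> u)" using IH2 by blast
          moreover have "\<forall>s. c \<le> s \<and> s \<le> t \<longrightarrow> TS (\<rho> s) x = Coming" using ce by auto
          ultimately have "DL (\<rho> t) x \<noteq> Infty" using dl_not_infty[OF ce(1)] by blast
          then show False using n by simp
        qed
        then show ?thesis using n ce by auto
      qed
    qed
  qed
  obtain e where e: "e > 0" "\<forall>s. t < s \<and> s < t + e \<longrightarrow> \<rho> s = rval \<rho> t"
    using rval_prop[OF pre t2] by blast
  show "\<exists>e>0. \<forall>s. t < s \<and> s < t + e \<longrightarrow> Gs dc dm \<rho> s (\<rho> s)" using e R Gs_mono[OF R] by (intro exI[of _ e]) auto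
next
  show "0 \<le> t" using t00 .
qed

end



theorem mainTheorem12:
  fixes \<rho> :: "real \<Rightarrow> ('tr::finite) st"
    and dclose dopen dmin dmax \<alpha> :: real
  assumes "0 < dclose" and "0 < dopen" and "0 < dmin" and "0 < dmax"
    and "dclose < dmin" and "dmin \<le> dmax"
    and "regular_run dclose dopen dmin dmax \<rho>"
    and "0 \<le> \<alpha>"
    and "becomes \<rho> Dir Close \<alpha>"
  shows "\<forall>s. \<alpha> < s \<and> s < \<alpha> + dclose \<longrightarrow> Dir (\<rho> s) = Close"
proof -
  note ctx = assms(1) assms(2) assms(5) assms(7)
  have run: "is_run dclose dopen dmin \<rho>" by (rule run[OF ctx])
  have pre: "pre_run \<rho>" by (rule pre[OF ctx])
  have a0: "0 \<le> \<alpha>" by fact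
  have h: "Dir (\<rho> \<alpha>) \<noteq> Close" "Dir (rval \<rho> \<alpha>) = Close"
  proof -
    have "\<not> (\<alpha> > 0 \<and> Dir (lval \<rho> \<alpha>) \<noteq> Close \<and> Dir (\<rho> \<alpha>) = Close)"
      using run_left[OF run] by auto
    then show "Dir (\<rho> \<alpha>) \<noteq> Close" "Dir (rval \<rho> \<alpha>) = Close"
      using assms(9) unfolding becomes_def by auto
  qed
  then have "rval \<rho> \<alpha> \<noteq> \<rho> \<alpha>" by auto
  then obtain M where M: "rval \<rho> \<alpha> = exec dclose dopen dmin M \<alpha> (\<rho> \<alpha>)" using run_right[OF run a0] by blast
  have "Dir (exec dclose dopen dmin M \<alpha> (\<rho> \<alpha>)) = Dir (\<rho> \<alpha>) \<or>
        UDir (Dir (exec dclose dopen dmin M \<alpha> (\<rho> \<alpha>))) \<in> upds dclose dopen dmin Controller \<alpha> (\<rho> \<alpha>)"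
    by (rule exec_Dir_cases)
  then have "UDir Close \<in> upds dclose dopen dmin Controller \<alpha> (\<rho> \<alpha>)" using h M by auto
  then obtain x where x: "DL (\<rho> \<alpha>) x = Fin \<alpha>" by (auto simp: upds_C_Dir)
  have "Gs dclose dmin \<rho> \<alpha> (\<rho> \<alpha>)" by (rule G_all[OF ctx a0])
  then have "\<forall>s. \<alpha> - (dmin - dclose) \<le> s \<and> s < \<alpha> - (dmin - dclose) + dmin \<longrightarrow> TS (\<rho> s) x = Coming"
    using x unfolding Gs_def by blast
  then have com: "\<forall>s. \<alpha> \<le> s \<and> s < \<alpha> + dclose \<longrightarrow> TS (\<rho> s) x = Coming"
    using assms(5) by auto
  have DLx: "DL (\<rho> u) x = Fin \<alpha>" if "\<alpha> \<le> u" "u < \<alpha> + dclose" for u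
  proof -
    let ?P = "\<lambda>u. u < \<alpha> + dclose \<longrightarrow> DL (\<rho> u) x = Fin \<alpha>"
    have "?P u"
    proof (rule real_induct_from[of \<alpha> ?P])
      fix u assume au: "\<alpha> \<le> u" and IH: "\<And>v. \<alpha> \<le> v \<Longrightarrow> v < u \<Longrightarrow> ?P v"
      show "?P u"
      proof (cases "u = \<alpha>")
        case True then show ?thesis using x by simp
      next
        case False
        then have au': "\<alpha> < u" using au by simp
        obtain s where s: "\<alpha> < s" "s < u" "\<rho> s = lval \<rho> u" using left_pick[OF pre a0 au'] by blast
        have "DL (\<rho> u) = DL (lval \<rho> u)" using run_left[OF run] au' a0 by auto
        then show ?thesis using IH[of s] s by auto
      qed
    next
      fix u assume au: "\<alpha> \<le> u" and IH: "\<And>v. \<alpha> \<le> v \<Longrightarrow> v \<le> u \<Longrightarrow> ?P v"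
      show "\<exists>e>0. \<forall>s. u < s \<and> s < u + e \<longrightarrow> ?P s"
      proof (cases "\<alpha> + dclose \<le> u")
        case True then show ?thesis by (intro exI[of _ 1]) auto
      next
        case False
        have u0: "0 \<le> u" using au a0 by simp
        have d: "DL (\<rho> u) x = Fin \<alpha>" using IH[of u] au False by auto
        have "TS (\<rho> u) x = Coming" using com au False by auto
        then have "DL (rval \<rho> u) x = Fin \<alpha>" using preserve_DL[OF ctx u0] d by simp
        moreover obtain e where e: "e > 0" "\<forall>s. u < s \<and> s < u + e \<longrightarrow> \<rho> s = rval \<rho> u"
          using rval_prop[OF pre u0] by blast
        ultimately show ?thesis by (intro exI[of _ e]) auto
      qed
    next
      show "\<alpha> \<le> u" by fact
    qed
    then show ?thesis using that by simp
  qed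
  let ?P = "\<lambda>u. \<alpha> < u \<and> u < \<alpha> + dclose \<longrightarrow> Dir (\<rho> u) = Close"
  have all: "?P u" if "\<alpha> \<le> u" for u
  proof (rule real_induct_from[of \<alpha> ?P])
    fix u assume au: "\<alpha> \<le> u" and IH: "\<And>v. \<alpha> \<le> v \<Longrightarrow> v < u \<Longrightarrow> ?P v"
    show "?P u"
    proof
      assume hu: "\<alpha> < u \<and> u < \<alpha> + dclose"
      obtain s where s: "\<alpha> < s" "s < u" "\<rho> s = lval \<rho> u" using left_pick[OF pre a0] hu by blast
      have "Dir (\<rho> u) = Dir (lval \<rho> u)" using run_left[OF run] hu a0 by auto
      then show "Dir (\<rho> u) = Close" using IH[of s] s hu by auto
    qed
  next
    fix u assume au: "\<alpha> \<le> u" and IH: "\<And>v. \<alpha> \<le> v \<Longrightarrow> v \<le> u \<Longrightarrow> ?P v"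
    show "\<exists>e>0. \<forall>s. u < s \<and> s < u + e \<longrightarrow> ?P s"
    proof (cases "\<alpha> + dclose \<le> u")
      case True then show ?thesis by (intro exI[of _ 1]) auto
    next
      case False
      have u0: "0 \<le> u" using au a0 by simp
      have R: "Dir (rval \<rho> u) = Close"
      proof (cases "u = \<alpha>")
        case True then show ?thesis using h by simp
      next
        case False
        then have au': "\<alpha> < u" using au by simp
        have du: "Dir (\<rho> u) = Close" using IH[of u] au au' \<open>\<not> \<alpha> + dclose \<le> u\<close> by auto
        show ?thesis
        proof (cases "rval \<rho> u = \<rho> u")
          case True then show ?thesis using du by simp
        next
          case False
          then obtain M where M: "rval \<rho> u = exec dclose dopen dmin M u (\<rho> u)" using run_right[OF run u0] by blast
          have nsafe: "\<not> SafeToOpen dopen u (\<rho> u)"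
          proof
            assume "SafeToOpen dopen u (\<rho> u)"
            then have "TS (\<rho> u) x = Empty \<or> xless (Fin (u + dopen)) (DL (\<rho> u) x)"
              unfolding SafeToOpen_def by blast
            moreover have "TS (\<rho> u) x = Coming" using com au \<open>\<not> \<alpha> + dclose \<le> u\<close> by auto
            moreover have "DL (\<rho> u) x = Fin \<alpha>" using DLx au \<open>\<not> \<alpha> + dclose \<le> u\<close> by auto
            ultimately show False using au' assms(2) by auto
          qed
          have "Dir (exec dclose dopen dmin M u (\<rho> u)) = Dir (\<rho> u) \<or>
                UDir (Dir (exec dclose dopen dmin M u (\<rho> u))) \<in> upds dclose dopen dmin Controller u (\<rho> u)"
            by (rule exec_Dir_cases)
          then show ?thesis using M du nsafe by (auto simp: upds_C_Dir)
        qed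
      qed
      obtain e where e: "e > 0" "\<forall>s. u < s \<and> s < u + e \<longrightarrow> \<rho> s = rval \<rho> u"
        using rval_prop[OF pre u0] by blast
      show ?thesis using e R by (intro exI[of _ e]) auto
    qed
  next
    show "\<alpha> \<le> u" by fact
  qed
  show ?thesis using all by auto
qed


end
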